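(* Let $\mathfrak g$ be a $3$-dimensional complex vector space. Every non-degenerate product $\mu$ on $\mathfrak g$ is equivalent (under the $\operatorname{GL}(\mathfrak g)$-action) to exactly one of the products whose matrices, in a suitable basis, are $$\mu_{1;a}=\begin{pmatrix}1&0&0\\0&1&-a\\0&a&1\end{pmatrix}\ (a\in\mathbb C\setminus\{0\}),\qquad \mu_2=\mathbb 1_3,\qquad \mu_3=\begin{pmatrix}0&1&0\\1&0&-1\\0&1&1\end{pmatrix}.$$ Moreover, $\mu_{1;a}$ is equivalent to $\mu_{1;a'}$ if and only if $a=\pm a'$.
   Context: A product on a complex vector space $\mathfrak g$ is a skew-symmetric bilinear map $\mu:\mathfrak g\times\mathfrak g\to\mathfrak g$. Given a basis $\{e_1,e_2,e_3\}$, the matrix $M_\mu=(\mu_{ij})$ of $\mu$ is defined by $\mu(e_2,e_3)=\sum_i\mu_{i1}e_i$, $\mu(e_3,e_1)=\sum_i\mu_{i2}e_i$, $\mu(e_1,e_2)=\sum_i\mu_{i3}e_i$; this gives a bijection between products and $3\times 3$ complex matrices. $\operatorname{GL}(\mathfrak g)$ acts on products by $(g\cdot\mu)(x,y)=g(\mu(g^{-1}x,g^{-1}y))$, and in matrix terms $M_{g\cdot\mu}=(\det g)^{-1}gM_\mu g^t$; two products are equivalent if they lie in the same orbit. The product $\mu$ is called non-degenerate if the symmetric part $\tfrac12(M_\mu+M_\mu^t)$ of its matrix is an invertible matrix, and degenerate otherwise. *)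

theory Defs
  imports "HOL-Analysis.Analysis"
begin

text \<open>A product on the 3-dimensional complex space is identified (via the fixed
basis e1,e2,e3) with its 3x3 complex matrix M, entry (i,j) being M $ i $ j.\<close>
type_synonym cmat3 = "complex^3^3"

definition gl_act :: "cmat3 \<Rightarrow> cmat3 \<Rightarrow> cmat3" where
  "gl_act g M = mat (inverse (det g)) ** (g ** M ** transpose g)"

definition prod_equiv :: "cmat3 \<Rightarrow> cmat3 \<Rightarrow> bool" where
  "prod_equiv M N \<longleftrightarrow> (\<exists>g. invertible g \<and> N = gl_act g M)"

definition non_degenerate :: "cmat3 \<Rightarrow> bool" where
  "non_degenerate M \<longleftrightarrow> invertible (mat (1/2) ** (M + transpose M))"

definition mu1 :: "complex \<Rightarrow> cmat3" where
  "mu1 a = vector [vector [1, 0, 0], vector [0, 1, -a], vector [0, a, 1]]"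

definition mu2 :: cmat3 where
  "mu2 = mat 1"

definition mu3 :: cmat3 where
  "mu3 = vector [vector [0, 1, 0], vector [1, 0, -1], vector [0, 1, 1]]"

end

theory Submission
  imports Defs
begin


definition mk3 :: "complex \<Rightarrow> complex \<Rightarrow> complex \<Rightarrow> complex \<Rightarrow> complex \<Rightarrow> complex \<Rightarrow> complex \<Rightarrow> complex \<Rightarrow> complex \<Rightarrow> cmat3" where
  "mk3 a b c d e f g h i = vector [vector [a,b,c], vector [d,e,f], vector [g,h,i]]"

lemma mk3_nth[simp]:
  "mk3 a b c d e f g h i $ 1 $ 1 = a" "mk3 a b c d e f g h i $ 1 $ 2 = b" "mk3 a b c d e f g h i $ 1 $ 3 = c"
  "mk3 a b c d e f g h i $ 2 $ 1 = d" "mk3 a b c d e f g h i $ 2 $ 2 = e" "mk3 a b c d e f g h i $ 2 $ 3 = f"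
  "mk3 a b c d e f g h i $ 3 $ 1 = g" "mk3 a b c d e f g h i $ 3 $ 2 = h" "mk3 a b c d e f g h i $ 3 $ 3 = i"
  by (simp_all add: mk3_def)

lemma mk3_eq: "(mk3 a b c d e f g h i = mk3 a' b' c' d' e' f' g' h' i') \<longleftrightarrow>
   a = a' \<and> b = b' \<and> c = c' \<and> d = d' \<and> e = e' \<and> f = f' \<and> g = g' \<and> h = h' \<and> i = i'"
  by (auto simp: vec_eq_iff forall_3)

lemma mk3_expand: "(M::cmat3) = mk3 (M$1$1) (M$1$2) (M$1$3) (M$2$1) (M$2$2) (M$2$3) (M$3$1) (M$3$2) (M$3$3)"
  by (simp add: vec_eq_iff forall_3)

lemma mk3_mult: "mk3 a b c d e f g h i ** mk3 a' b' c' d' e' f' g' h' i' =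
  mk3 (a*a'+b*d'+c*g') (a*b'+b*e'+c*h') (a*c'+b*f'+c*i')
      (d*a'+e*d'+f*g') (d*b'+e*e'+f*h') (d*c'+e*f'+f*i')
      (g*a'+h*d'+i*g') (g*b'+h*e'+i*h') (g*c'+h*f'+i*i')"
  by (simp add: vec_eq_iff forall_3 matrix_matrix_mult_def sum_3)

lemma mk3_transpose: "transpose (mk3 a b c d e f g h i) = mk3 a d g b e h c f i"
  by (simp add: vec_eq_iff forall_3 transpose_def)

lemma mk3_det: "det (mk3 a b c d e f g h i) = a*e*i + b*f*g + c*d*h - a*f*h - b*d*i - c*e*g"
  by (simp add: det_3)

lemma mk3_mat: "(mat x :: cmat3) = mk3 x 0 0 0 x 0 0 0 x"
  by (simp add: vec_eq_iff forall_3 mat_def)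

lemma mk3_add: "mk3 a b c d e f g h i + mk3 a' b' c' d' e' f' g' h' i' =
  mk3 (a+a') (b+b') (c+c') (d+d') (e+e') (f+f') (g+g') (h+h') (i+i')"
  by (simp add: vec_eq_iff forall_3)

lemma mk3_diff: "mk3 a b c d e f g h i - mk3 a' b' c' d' e' f' g' h' i' =
  mk3 (a-a') (b-b') (c-c') (d-d') (e-e') (f-f') (g-g') (h-h') (i-i')"
  by (simp add: vec_eq_iff forall_3)

lemma mk3_neg: "- mk3 a b c d e f g h i = mk3 (-a) (-b) (-c) (-d) (-e) (-f) (-g) (-h) (-i)"
  by (simp add: vec_eq_iff forall_3)

lemma mk3_mv: "mk3 a b c d e f g h i *v vector [x,y,z] = vector [a*x+b*y+c*z, d*x+e*y+f*z, g*x+h*y+i*z]"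
  by (simp add: vec_eq_iff forall_3 matrix_vector_mult_def sum_3)

lemma mu1_mk3: "mu1 a = mk3 1 0 0 0 1 (-a) 0 a 1" by (simp add: mu1_def mk3_def)
lemma mu2_mk3: "mu2 = mk3 1 0 0 0 1 0 0 0 1" by (simp add: mu2_def mk3_mat)
lemma mu3_mk3: "mu3 = mk3 0 1 0 1 0 (-1) 0 1 1" by (simp add: mu3_def mk3_def)

lemma mat_comm: "mat c ** (X::cmat3) = X ** mat c"
  by (simp add: vec_eq_iff matrix_matrix_mult_def mat_def forall_3 sum_3 mult.commute)

lemma mat_mult_left: "(mat c ** (X::cmat3)) ** Y = mat c ** (X ** Y)"
  by (simp add: matrix_mul_assoc)
lemma mat_mult_right: "(X::cmat3) ** (mat c ** Y) = mat c ** (X ** Y)"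
  by (metis mat_comm matrix_mul_assoc)
lemma mat_mat: "mat a ** (mat b ** (X::cmat3)) = mat (a*b) ** X"
  by (simp add: vec_eq_iff matrix_matrix_mult_def mat_def forall_3 sum_3)
lemma transpose_matc: "transpose (mat c ** (X::cmat3)) = mat c ** transpose X"
  by (metis mat_comm matrix_transpose_mul transpose_mat)

lemma gl_act_comp:
  assumes "det g \<noteq> 0" "det h \<noteq> 0"
  shows "gl_act (g ** h) M = gl_act g (gl_act h M)"
proof -
  have 1: "g ** h ** M ** transpose (g ** h) = g ** (h ** M ** transpose h) ** transpose g"
    by (simp add: matrix_transpose_mul matrix_mul_assoc)
  have 2: "g ** (mat c ** X) ** transpose g = mat c ** (g ** X ** transpose g)" for c X
    by (simp only: mat_mult_right mat_mult_left)
  have 3: "inverse (det (g ** h)) = inverse (det g) * inverse (det h)"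
    by (simp add: det_mul)
  show ?thesis
    unfolding gl_act_def 1 2 3 mat_mat ..
qed

lemma gl_act_id: "gl_act (mat 1) M = M"
  by (simp add: gl_act_def)

lemma prod_equiv_refl: "prod_equiv M M"
  unfolding prod_equiv_def by (metis gl_act_id invertible_det_nz det_I one_neq_zero)

lemma prod_equiv_trans: "prod_equiv A B \<Longrightarrow> prod_equiv B C \<Longrightarrow> prod_equiv A C"
  unfolding prod_equiv_def
  by (metis gl_act_comp invertible_det_nz invertible_mult)

lemma det_matc: "det (mat c ** (X::cmat3)) = c^3 * det X"
  by (simp add: det_mul mk3_mat mk3_det power3_eq_cube)

lemma det_gl_act: "det g \<noteq> 0 \<Longrightarrow> det (gl_act g M) * det g = det M"
  unfolding gl_act_def det_matc by (simp add: det_mul power3_eq_cube field_simps)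

lemma mm_add_r: "((A::cmat3) + B) ** C = A ** C + B ** C"
  by (simp add: vec_eq_iff matrix_matrix_mult_def forall_3 sum_3 algebra_simps)
lemma mm_sub_r: "((A::cmat3) - B) ** C = A ** C - B ** C"
  by (simp add: vec_eq_iff matrix_matrix_mult_def forall_3 sum_3 algebra_simps)
lemma mm_sub_l: "(C::cmat3) ** (A - B) = C ** A - C ** B"
  by (simp add: vec_eq_iff matrix_matrix_mult_def forall_3 sum_3 algebra_simps)

lemma gl_act_add: "gl_act g (A + B) = gl_act g A + gl_act g B"
  unfolding gl_act_def
  by (simp add: matrix_add_ldistrib mm_add_r)

lemma gl_act_diff: "gl_act g (A - B) = gl_act g A - gl_act g B"
  unfolding gl_act_def
  by (simp add: mm_sub_l mm_sub_r)

lemma gl_act_transpose: "transpose (gl_act g A) = gl_act g (transpose A)"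
  unfolding gl_act_def transpose_matc
  by (simp add: matrix_transpose_mul matrix_mul_assoc)

lemma gl_act_zero: "gl_act g 0 = 0"
  unfolding gl_act_def by simp

lemma gl_act_inj0:
  assumes "invertible g" "gl_act g X = 0" shows "X = 0"
proof -
  obtain h where h: "h ** g = mat 1" using assms(1) invertible_left_inverse by blast
  have "det h \<noteq> 0" "det g \<noteq> 0" using h by (metis det_I det_mul mult_zero_left mult_zero_right one_neq_zero)+
  then have "gl_act h (gl_act g X) = X" by (simp add: gl_act_comp[symmetric] h gl_act_id)
  with assms(2) show ?thesis by (simp add: gl_act_zero)
qed


lemma skew_gl: "gl_act g M - transpose (gl_act g M) = gl_act g (M - transpose M)"
  by (simp add: gl_act_diff gl_act_transpose)
lemma sym_gl: "gl_act g M + transpose (gl_act g M) = gl_act g (M + transpose M)"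
  by (simp add: gl_act_add gl_act_transpose)

lemma inv_ratio:
  assumes "invertible g"
  shows "det (gl_act g M) * det (M + transpose M) = det M * det (gl_act g M + transpose (gl_act g M))"
proof -
  have d: "det g \<noteq> 0" using assms invertible_det_nz by blast
  have 1: "det (gl_act g M) * det g = det M" using det_gl_act[OF d] .
  have 2: "det (gl_act g M + transpose (gl_act g M)) * det g = det (M + transpose M)"
    unfolding sym_gl using det_gl_act[OF d] .
  show ?thesis unfolding 1[symmetric] 2[symmetric] by (simp add: algebra_simps)
qed

lemma skew_zero:
  assumes "invertible g" "gl_act g M - transpose (gl_act g M) = 0"
  shows "M - transpose M = 0"
  using assms gl_act_inj0 skew_gl by metis

lemma part2: "a \<noteq> 0 \<Longrightarrow> \<not> prod_equiv (mu1 a) mu2 \<and> \<not> prod_equiv (mu1 a) mu3"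
proof
  assume a: "a \<noteq> 0"
  show "\<not> prod_equiv (mu1 a) mu2"
  proof
    assume "prod_equiv (mu1 a) mu2"
    then obtain g where g: "invertible g" "mu2 = gl_act g (mu1 a)" unfolding prod_equiv_def by blast
    have "mu2 - transpose mu2 = 0" by (simp add: mu2_mk3 mk3_transpose mk3_diff)
    then have "mu1 a - transpose (mu1 a) = 0" using skew_zero g by metis
    then show False using a by (simp add: mu1_mk3 mk3_transpose mk3_diff mk3_mat[of 0, simplified, symmetric] mk3_eq)
  qed
  show "\<not> prod_equiv (mu1 a) mu3"
  proof
    assume "prod_equiv (mu1 a) mu3"
    then obtain g where g: "invertible g" "mu3 = gl_act g (mu1 a)" unfolding prod_equiv_def by blast
    have "det mu3 * det (mu1 a + transpose (mu1 a)) = det (mu1 a) * det (mu3 + transpose mu3)"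
      using inv_ratio[OF g(1), of "mu1 a"] g(2) by simp
    then have "a^2 = 0"
      by (simp add: mu1_mk3 mu3_mk3 mk3_transpose mk3_add mk3_det algebra_simps power2_eq_square)
    with a show False by simp
  qed
qed

lemma part3: "\<not> prod_equiv mu2 mu3"
proof
  assume "prod_equiv mu2 mu3"
  then obtain g where g: "invertible g" "mu3 = gl_act g mu2" unfolding prod_equiv_def by blast
  have "mu2 - transpose mu2 = 0" by (simp add: mu2_mk3 mk3_transpose mk3_diff)
  then have "mu3 - transpose mu3 = 0" using g by (metis skew_gl gl_act_zero)
  then show False by (simp add: mu3_mk3 mk3_transpose mk3_diff mk3_mat[of 0, simplified, symmetric] mk3_eq)
qed

lemma part4: "prod_equiv (mu1 a) (mu1 a') \<longleftrightarrow> a = a' \<or> a = - a'"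
proof
  assume "prod_equiv (mu1 a) (mu1 a')"
  then obtain g where g: "invertible g" "mu1 a' = gl_act g (mu1 a)" unfolding prod_equiv_def by blast
  have "det (mu1 a') * det (mu1 a + transpose (mu1 a)) = det (mu1 a) * det (mu1 a' + transpose (mu1 a'))"
    using inv_ratio[OF g(1), of "mu1 a"] g(2) by simp
  then have "a'^2 = a^2"
    by (simp add: mu1_mk3 mk3_transpose mk3_add mk3_det algebra_simps power2_eq_square)
  then show "a = a' \<or> a = - a'" by (metis power2_eq_iff)
next
  assume "a = a' \<or> a = - a'"
  then show "prod_equiv (mu1 a) (mu1 a')"
  proof
    assume "a = a'" then show ?thesis by (simp add: prod_equiv_refl)
  next
    assume e: "a = - a'"
    let ?g = "mk3 (-1) 0 0 0 (-1) 0 0 0 1"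
    have "det ?g = 1" by (simp add: mk3_det)
    moreover have "gl_act ?g (mu1 a) = mu1 a'"
      unfolding gl_act_def using e by (simp add: mk3_det mk3_mat mk3_mult mk3_transpose mu1_mk3 mk3_eq)
    ultimately show ?thesis unfolding prod_equiv_def by (metis invertible_det_nz one_neq_zero)
  qed
qed


definition skewm :: "complex^3 \<Rightarrow> cmat3" where
  "skewm v = mk3 0 (-(v$3)) (v$2) (v$3) 0 (-(v$1)) (-(v$2)) (v$1) 0"

definition cof :: "cmat3 \<Rightarrow> cmat3" where
  "cof g = mk3 (g$2$2*g$3$3 - g$2$3*g$3$2) (g$2$3*g$3$1 - g$2$1*g$3$3) (g$2$1*g$3$2 - g$2$2*g$3$1)
              (g$1$3*g$3$2 - g$1$2*g$3$3) (g$1$1*g$3$3 - g$1$3*g$3$1) (g$1$2*g$3$1 - g$1$1*g$3$2)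
              (g$1$2*g$2$3 - g$1$3*g$2$2) (g$1$3*g$2$1 - g$1$1*g$2$3) (g$1$1*g$2$2 - g$1$2*g$2$1)"

lemma cof_adj: "cof g ** transpose g = mat (det g)"
  by (simp add: cof_def vec_eq_iff forall_3 matrix_matrix_mult_def sum_3 det_3 transpose_def mat_def;
      simp add: algebra_simps)

lemma cof_skew: "g ** skewm v ** transpose g = skewm (cof g *v v)"
  by (simp add: cof_def skewm_def vec_eq_iff forall_3 matrix_matrix_mult_def matrix_vector_mult_def sum_3 transpose_def;
      simp add: algebra_simps)

lemma orth_act:
  assumes o: "Q ** transpose Q = mat 1" and d: "det Q = 1"
  shows "gl_act Q (mat 1 + skewm v) = mat 1 + skewm (Q *v v)"
proof -
  have o2: "transpose Q ** Q = mat 1" using o matrix_left_right_inverse by blast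
  have "cof Q = cof Q ** (transpose Q ** Q)" by (simp add: o2)
  also have "\<dots> = Q" by (simp add: matrix_mul_assoc cof_adj d)
  finally have c: "cof Q = Q" .
  show ?thesis unfolding gl_act_def d
    by (simp add: matrix_add_ldistrib mm_add_r o cof_skew c)
qed

definition dot :: "complex^3 \<Rightarrow> complex^3 \<Rightarrow> complex" where
  "dot x y = x$1*y$1 + x$2*y$2 + x$3*y$3"

definition hh :: "complex \<Rightarrow> complex \<Rightarrow> complex \<Rightarrow> complex \<Rightarrow> cmat3" where
  "hh k x y z = mk3 (k*x*x - 1) (k*x*y) (k*x*z) (k*y*x) (k*y*y - 1) (k*y*z) (k*z*x) (k*z*y) (k*z*z - 1)"

lemma hh_orth:
  assumes h: "k * (x*x+y*y+z*z) = 2"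
  shows "hh k x y z ** transpose (hh k x y z) = mat 1"
proof -
  have e: "k*k*(x*x+y*y+z*z) = 2*k" using h by (metis mult.assoc mult.commute)
  show ?thesis
  unfolding hh_def mk3_transpose mk3_mult mk3_mat mk3_eq
  by (intro conjI; insert e; algebra)
qed

lemma hh_det:
  assumes h: "k * (x*x+y*y+z*z) = 2"
  shows "det (hh k x y z) = 1"
proof -
  have "det (hh k x y z) = k * (x*x+y*y+z*z) - 1"
    unfolding hh_def mk3_det by algebra
  then show ?thesis using h by simp
qed

lemma hh_apply: "hh k x y z *v vector [a,b,c] = vector [k*(x*a+y*b+z*c)*x - a, k*(x*a+y*b+z*c)*y - b, k*(x*a+y*b+z*c)*z - c]"
  unfolding hh_def mk3_mv by (simp add: algebra_simps)


lemma refl_step: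
  assumes uu: "(v1-w1) *(v1-w1)+(v2-w2) *(v2-w2)+(v3-w3) *(v3-w3) \<noteq> 0"
    and vw: "v1* v1+v2* v2+v3* v3 = w1* w1+w2* w2+w3* w3"
  shows "prod_equiv (mat 1 + skewm (vector[v1,v2,v3])) (mat 1 + skewm (vector[-w1,-w2,-w3]))"
proof -
  define U where "U = (v1-w1) *(v1-w1)+(v2-w2) *(v2-w2)+(v3-w3) *(v3-w3)"
  define k where "k = 2 / U"
  have U0: "U \<noteq> 0" using uu U_def by simp
  have kU: "k * U = 2" using U0 k_def by simp
  have dv: "2 * ((v1-w1)* v1+(v2-w2)* v2+(v3-w3)* v3) = U" unfolding U_def using vw by algebra
  have k1: "k * ((v1-w1)* v1+(v2-w2)* v2+(v3-w3)* v3) = 1"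
    using dv kU U0 unfolding k_def by (metis divide_divide_eq_right nonzero_mult_div_cancel_left
      divide_self_if mult.commute times_divide_eq_left zero_neq_numeral)
  let ?Q = "hh k (v1-w1) (v2-w2) (v3-w3)"
  have o: "?Q ** transpose ?Q = mat 1" by (rule hh_orth) (use kU U_def in simp)
  have d: "det ?Q = 1" by (rule hh_det) (use kU U_def in simp)
  have a: "?Q *v vector[v1,v2,v3] = vector[-w1,-w2,-w3]"
    unfolding hh_apply using k1 by (simp add: algebra_simps)
  have "gl_act ?Q (mat 1 + skewm (vector[v1,v2,v3])) = mat 1 + skewm (vector[-w1,-w2,-w3])"
    using orth_act[OF o d] a by simp
  then show ?thesis unfolding prod_equiv_def using d invertible_det_nz by (metis one_neq_zero)
qed

lemma mu3_from_iso:
  assumes "s = 1 \<or> s = -1"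
  shows "prod_equiv (mat 1 + skewm (vector[-1, -(s *\<i>), -0])) mu3"
proof -
  let ?g = "mk3 (-1) (-(s *\<i>)) 0 (1/2) (-(s *\<i>)/2) 0 0 0 (s *\<i>)"
  have d: "det ?g = -1" using assms by (auto simp: mk3_det algebra_simps)
  have "gl_act ?g (mat 1 + skewm (vector[-1, -(s *\<i>), -0])) = mu3"
    unfolding gl_act_def d using assms
    by (auto simp: skewm_def mk3_mat mk3_add mk3_mult mk3_transpose mu3_mk3 mk3_eq algebra_simps)
  then show ?thesis unfolding prod_equiv_def using d invertible_det_nz by (metis neg_equal_0_iff_equal one_neq_zero)
qed

lemma stage2:
  assumes "M + transpose M = mat 2"
  shows "(\<exists>a. a \<noteq> 0 \<and> prod_equiv M (mu1 a)) \<or> prod_equiv M mu2 \<or> prod_equiv M mu3"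
proof -
  define v1 where "v1 = M$3$2"
  define v2 where "v2 = M$1$3"
  define v3 where "v3 = M$2$1"
  have h: "\<forall>i j. M$i$j + M$j$i = (if i = j then 2 else 0)"
    using assms by (simp add: vec_eq_iff transpose_def mat_def)
  have Mv: "M = mat 1 + skewm (vector[v1,v2,v3])"
    using h unfolding v1_def v2_def v3_def
    apply (simp add: vec_eq_iff forall_3 mat_def skewm_def)
    apply (metis add.commute eq_neg_iff_add_eq_0)
    done
  define q where "q = v1 * v1 + v2 * v2 + v3 * v3"
  have mu1v: "mat 1 + skewm (vector[x, -0, -0]) = mu1 x" for x
    by (simp add: skewm_def mk3_mat mk3_add mu1_mk3)
  show ?thesis
  proof (cases "v1 = 0 \<and> v2 = 0 \<and> v3 = 0")
    case True
    then have "M = mu2" using Mv by (simp add: skewm_def mk3_mat mk3_add mu2_mk3)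
    then show ?thesis using prod_equiv_refl by simp
  next
    case nz: False
    show ?thesis
    proof (cases "q = 0")
      case False
      define a where "a = csqrt q"
      have aa: "a * a = q" unfolding a_def by (metis power2_csqrt power2_eq_square)
      have a0: "a \<noteq> 0" using aa False by auto
      show ?thesis
      proof (cases "a = v1")
        case False
        have "(v1-a) * (v1-a)+(v2-0) * (v2-0)+(v3-0) * (v3-0) = 2 * a * (a - v1)"
          using aa unfolding q_def by algebra
        then have "(v1-a) * (v1-a)+(v2-0) * (v2-0)+(v3-0) * (v3-0) \<noteq> 0" using a0 False by simp
        from refl_step[OF this] have "prod_equiv M (mu1 (-a))"
          using aa Mv mu1v unfolding q_def by simp
        then show ?thesis using a0 by (intro disjI1 exI[of _ "-a"]) simp
      next
        case True
        have "(v1-(-a)) * (v1-(-a))+(v2-0) * (v2-0)+(v3-0) * (v3-0) = 4 * a * a"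
          using aa True unfolding q_def by algebra
        then have "(v1-(-a)) * (v1-(-a))+(v2-0) * (v2-0)+(v3-0) * (v3-0) \<noteq> 0" using a0 by simp
        from refl_step[OF this] have "prod_equiv M (mu1 a)"
          using aa Mv mu1v unfolding q_def by simp
        then show ?thesis using a0 by auto
      qed
    next
      case q0: True
      obtain s where s: "s = 1 \<or> s = -1" and sn: "v1 + s * \<i> * v2 \<noteq> 0"
      proof (cases "v1 + 1 * \<i> * v2 = 0")
        case False then show ?thesis using that by blast
      next
        case True
        have "v1 + (-1) * \<i> * v2 \<noteq> 0"
        proof
          assume "v1 + (-1) * \<i> * v2 = 0"
          with True have "v1 = 0" "v2 = 0" by (auto simp: algebra_simps)
          with q0 have "v3 * v3 = 0" unfolding q_def by simp
          with nz \<open>v1 = 0\<close> \<open>v2 = 0\<close> show False by simp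
        qed
        then show ?thesis using that by blast
      qed
      have ss: "s * s = 1" using s by auto
      have "(v1-1) * (v1-1)+(v2-s * \<i>) * (v2-s * \<i>)+(v3-0) * (v3-0)
            = q - 2 * (v1 + s * \<i> * v2) + (1 + (s * s) * (\<i> * \<i>))"
        unfolding q_def by algebra
      also have "\<dots> = - 2 * (v1 + s * \<i> * v2)" using q0 ss by simp
      also have "\<dots> \<noteq> 0" using sn by (simp only: mult_minus_left[symmetric] mult_eq_0_iff) simp
      finally have "(v1-1) * (v1-1)+(v2-s * \<i>) * (v2-s * \<i>)+(v3-0) * (v3-0) \<noteq> 0" .
      moreover have "v1 * v1 + v2 * v2 + v3 * v3 = 1 * 1 + (s * \<i>) * (s * \<i>) + 0 * 0"
        using q0 ss unfolding q_def by (simp add: algebra_simps)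
      ultimately have "prod_equiv M (mat 1 + skewm (vector[-1, -(s * \<i>), -0]))"
        using refl_step Mv by metis
      then show ?thesis using mu3_from_iso[OF s] prod_equiv_trans by blast
    qed
  qed
qed


definition congr :: "cmat3 \<Rightarrow> cmat3 \<Rightarrow> bool" where
  "congr S T \<longleftrightarrow> (\<exists>P. det P \<noteq> 0 \<and> T = P ** S ** transpose P)"

lemma congr_I: "det P \<noteq> 0 \<Longrightarrow> T = P ** S ** transpose P \<Longrightarrow> congr S T"
  unfolding congr_def by blast

lemma congr_trans: "congr A B \<Longrightarrow> congr B C \<Longrightarrow> congr A C"
  unfolding congr_def
proof (elim exE conjE)
  fix P Q assume "det P \<noteq> 0" "B = P ** A ** transpose P" "det Q \<noteq> 0" "C = Q ** B ** transpose Q"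
  then show "\<exists>R. det R \<noteq> 0 \<and> C = R ** A ** transpose R"
    by (intro exI[of _ "Q ** P"]) (simp add: det_mul matrix_transpose_mul matrix_mul_assoc)
qed

lemma congr_refl: "congr A A"
  by (rule congr_I[of "mat 1"]) simp_all

lemma congr_det: "congr A B \<Longrightarrow> det A \<noteq> 0 \<Longrightarrow> det B \<noteq> 0"
  unfolding congr_def by (auto simp: det_mul)

lemma piv1:
  assumes "det (mk3 p q r q s t r t u) \<noteq> 0"
  shows "\<exists>p' q' r' s' t' u'. p' \<noteq> 0 \<and> congr (mk3 p q r q s t r t u) (mk3 p' q' r' q' s' t' r' t' u')"
proof -
  let ?S = "mk3 p q r q s t r t u"
  consider "p \<noteq> 0" | "p = 0" "s \<noteq> 0" | "p = 0" "s = 0" "u \<noteq> 0" | "p = 0" "s = 0" "u = 0" "q \<noteq> 0"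
    | "p = 0" "s = 0" "u = 0" "q = 0" "r \<noteq> 0" | "p = 0" "q = 0" "r = 0" by blast
  then show ?thesis
  proof cases
    case 1 then show ?thesis using congr_refl by blast
  next
    case 2
    have "congr ?S (mk3 s q t q p r t r u)"
      by (rule congr_I[of "mk3 0 1 0 1 0 0 0 0 1"]) (simp_all add: mk3_det mk3_mult mk3_transpose)
    with 2 show ?thesis by blast
  next
    case 3
    have "congr ?S (mk3 u t r t s q r q p)"
      by (rule congr_I[of "mk3 0 0 1 0 1 0 1 0 0"]) (simp_all add: mk3_det mk3_mult mk3_transpose)
    with 3 show ?thesis by blast
  next
    case 4
    have "congr ?S (mk3 (2*q) q (r+t) q 0 t (r+t) t 0)"
      by (rule congr_I[of "mk3 1 1 0 0 1 0 0 0 1"]) (use 4 in \<open>simp_all add: mk3_det mk3_mult mk3_transpose mk3_eq\<close>)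
    then show ?thesis using 4
      by (intro exI[of _ "2*q"] exI[of _ q] exI[of _ "r+t"] exI[of _ 0] exI[of _ t] exI[of _ 0]) simp
  next
    case 5
    have "congr ?S (mk3 (2*r) t r t 0 t r t 0)"
      by (rule congr_I[of "mk3 1 0 1 0 1 0 0 0 1"]) (use 5 in \<open>simp_all add: mk3_det mk3_mult mk3_transpose mk3_eq\<close>)
    then show ?thesis using 5
      by (intro exI[of _ "2*r"] exI[of _ t] exI[of _ r] exI[of _ 0] exI[of _ t] exI[of _ 0]) simp
  next
    case 6
    then have False using assms by (simp add: mk3_det)
    then show ?thesis ..
  qed
qed


lemma clr1:
  assumes p: "p \<noteq> 0"
  shows "congr (mk3 p q r q s t r t u) (mk3 p 0 0 0 (s - q*q/p) (t - q*r/p) 0 (t - q*r/p) (u - r*r/p))"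
  by (rule congr_I[of "mk3 1 0 0 (-q/p) 1 0 (-r/p) 0 1"])
     (use p in \<open>simp_all add: mk3_det mk3_mult mk3_transpose mk3_eq field_simps\<close>)

lemma piv2:
  assumes "det (mk3 p 0 0 0 s t 0 t u) \<noteq> 0"
  shows "\<exists>s' t' u'. s' \<noteq> 0 \<and> congr (mk3 p 0 0 0 s t 0 t u) (mk3 p 0 0 0 s' t' 0 t' u')"
proof -
  let ?S = "mk3 p 0 0 0 s t 0 t u"
  consider "s \<noteq> 0" | "s = 0" "u \<noteq> 0" | "s = 0" "u = 0" "t \<noteq> 0" | "s = 0" "u = 0" "t = 0" by blast
  then show ?thesis
  proof cases
    case 1 then show ?thesis using congr_refl by blast
  next
    case 2
    have "congr ?S (mk3 p 0 0 0 u t 0 t s)"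
      by (rule congr_I[of "mk3 1 0 0 0 0 1 0 1 0"]) (simp_all add: mk3_det mk3_mult mk3_transpose)
    with 2 show ?thesis by blast
  next
    case 3
    have "congr ?S (mk3 p 0 0 0 (2*t) t 0 t 0)"
      by (rule congr_I[of "mk3 1 0 0 0 1 1 0 0 1"]) (use 3 in \<open>simp_all add: mk3_det mk3_mult mk3_transpose mk3_eq\<close>)
    then show ?thesis using 3
      by (intro exI[of _ "2*t"] exI[of _ t] exI[of _ 0]) simp
  next
    case 4
    then have False using assms by (simp add: mk3_det)
    then show ?thesis ..
  qed
qed

lemma clr2:
  assumes s: "s \<noteq> 0"
  shows "congr (mk3 p 0 0 0 s t 0 t u) (mk3 p 0 0 0 s 0 0 0 (u - t*t/s))"
  by (rule congr_I[of "mk3 1 0 0 0 1 0 0 (-t/s) 1"])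
     (use s in \<open>simp_all add: mk3_det mk3_mult mk3_transpose mk3_eq field_simps\<close>)

lemma sqinv: "(x::complex) \<noteq> 0 \<Longrightarrow> \<exists>a. a \<noteq> 0 \<and> a * (x * a) = 1"
proof -
  assume x: "x \<noteq> 0"
  have c: "csqrt x * csqrt x = x" by (metis power2_csqrt power2_eq_square)
  have c0: "csqrt x \<noteq> 0" using x by simp
  have "(1 / csqrt x) * (x * (1 / csqrt x)) = x / (csqrt x * csqrt x)" by simp
  also have "\<dots> = 1" using c x by simp
  finally show ?thesis using c0 by (intro exI[of _ "1 / csqrt x"]) simp
qed

lemma dg:
  assumes "p \<noteq> 0" "s \<noteq> 0" "u \<noteq> 0"
  shows "congr (mk3 p 0 0 0 s 0 0 0 u) (mat 1)"
proof -
  obtain a b c where a: "a \<noteq> 0" "a * (p * a) = 1" and b: "b \<noteq> 0" "b * (s * b) = 1"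
    and c: "c \<noteq> 0" "c * (u * c) = 1"
    using sqinv assms by metis
  have "mk3 a 0 0 0 b 0 0 0 c ** mk3 p 0 0 0 s 0 0 0 u ** transpose (mk3 a 0 0 0 b 0 0 0 c)
     = mk3 (a * (p * a)) 0 0 0 (b * (s * b)) 0 0 0 (c * (u * c))"
    by (simp add: mk3_mult mk3_transpose mult.assoc)
  also have "\<dots> = mat 1" using a b c by (simp add: mk3_mat)
  finally show ?thesis
    by (intro congr_I[of "mk3 a 0 0 0 b 0 0 0 c"]) (use a b c in \<open>simp_all add: mk3_det\<close>)
qed

lemma stage1:
  assumes sym: "transpose S = S" and d: "det S \<noteq> 0"
  shows "congr S (mat 1)"
proof -
  have Se: "S = mk3 (S$1$1) (S$1$2) (S$1$3) (S$1$2) (S$2$2) (S$2$3) (S$1$3) (S$2$3) (S$3$3)"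
  proof -
    have "transpose S $ i $ j = S $ i $ j" for i j using sym by simp
    then have st: "S$j$i = S$i$j" for i j by (simp add: transpose_def)
    show ?thesis by (simp add: vec_eq_iff forall_3 st[of 1 2] st[of 1 3] st[of 2 3])
  qed
  obtain p q r s t u where Sm: "S = mk3 p q r q s t r t u" using Se by blast
  obtain p1 q1 r1 s1 t1 u1 where p1: "p1 \<noteq> 0" and c1: "congr S (mk3 p1 q1 r1 q1 s1 t1 r1 t1 u1)"
    using piv1[of p q r s t u] d Sm by blast
  let ?S2 = "mk3 p1 0 0 0 (s1 - q1*q1/p1) (t1 - q1*r1/p1) 0 (t1 - q1*r1/p1) (u1 - r1*r1/p1)"
  have c2: "congr S ?S2" using congr_trans[OF c1 clr1[OF p1]] .
  have d2: "det ?S2 \<noteq> 0" using congr_det[OF c2 d] .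
  obtain s2 t2 u2 where s2: "s2 \<noteq> 0" and c3': "congr ?S2 (mk3 p1 0 0 0 s2 t2 0 t2 u2)"
    using piv2[OF d2] by blast
  have c3: "congr S (mk3 p1 0 0 0 s2 0 0 0 (u2 - t2*t2/s2))"
    using congr_trans[OF congr_trans[OF c2 c3'] clr2[OF s2]] .
  have "det (mk3 p1 0 0 0 s2 0 0 0 (u2 - t2*t2/s2)) \<noteq> 0" using congr_det[OF c3 d] .
  then have "u2 - t2*t2/s2 \<noteq> 0" by (simp add: mk3_det)
  then show ?thesis using congr_trans[OF c3 dg[OF p1 s2]] by blast
qed


lemma transpose_add3: "transpose ((A::cmat3) + B) = transpose A + transpose B"
  by (simp add: vec_eq_iff transpose_def)

lemma gl_act_scal: "l \<noteq> 0 \<Longrightarrow> gl_act (mat l) (mat c) = mat (c / l)"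
  unfolding gl_act_def by (simp add: mk3_mat mk3_mult mk3_det mk3_transpose mk3_eq field_simps)

lemma part1:
  assumes nd: "non_degenerate M"
  shows "(\<exists>a. a \<noteq> 0 \<and> prod_equiv M (mu1 a)) \<or> prod_equiv M mu2 \<or> prod_equiv M mu3"
proof -
  let ?S = "M + transpose M"
  have "det (mat (1/2) ** ?S) \<noteq> 0" using nd unfolding non_degenerate_def by (simp add: invertible_det_nz)
  then have dS: "det ?S \<noteq> 0" by (simp add: det_matc)
  have sy: "transpose ?S = ?S" by (simp add: transpose_add3 add.commute)
  obtain P where dP: "det P \<noteq> 0" and PS: "mat 1 = P ** ?S ** transpose P"
    using stage1[OF sy dS] unfolding congr_def by blast
  define l where "l = 1 / (2 * det P)"
  have l0: "l \<noteq> 0" using dP l_def by simp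
  have dl: "det (mat l :: cmat3) \<noteq> 0" using l0 by (simp add: mk3_mat mk3_det)
  let ?g = "mat l ** P"
  have dg: "det ?g \<noteq> 0" using dl dP by (simp add: det_mul)
  have "gl_act ?g ?S = gl_act (mat l) (gl_act P ?S)" by (rule gl_act_comp[OF dl dP])
  also have "gl_act P ?S = mat (inverse (det P))" unfolding gl_act_def PS[symmetric] by simp
  also have "gl_act (mat l) (mat (inverse (det P))) = mat 2"
  proof -
    have e: "inverse (det P) / l = 2" using dP by (simp add: l_def field_simps)
    show ?thesis by (simp only: gl_act_scal[OF l0] e)
  qed
  finally have "gl_act ?g ?S = mat 2" .
  then have "gl_act ?g M + transpose (gl_act ?g M) = mat 2" by (simp add: sym_gl)
  from stage2[OF this]
  have "(\<exists>a. a \<noteq> 0 \<and> prod_equiv (gl_act ?g M) (mu1 a)) \<or> prod_equiv (gl_act ?g M) mu2 \<or> prod_equiv (gl_act ?g M) mu3" .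
  moreover have "prod_equiv M (gl_act ?g M)" unfolding prod_equiv_def using dg invertible_det_nz by blast
  ultimately show ?thesis using prod_equiv_trans by blast
qed

theorem proposition2p2:
  shows "(\<forall>M. non_degenerate M \<longrightarrow>
            (\<exists>a. a \<noteq> 0 \<and> prod_equiv M (mu1 a)) \<or> prod_equiv M mu2 \<or> prod_equiv M mu3)
       \<and> (\<forall>a. a \<noteq> 0 \<longrightarrow> \<not> prod_equiv (mu1 a) mu2 \<and> \<not> prod_equiv (mu1 a) mu3)
       \<and> \<not> prod_equiv mu2 mu3
       \<and> (\<forall>a a'. a \<noteq> 0 \<longrightarrow> a' \<noteq> 0 \<longrightarrow>
            (prod_equiv (mu1 a) (mu1 a') \<longleftrightarrow> a = a' \<or> a = - a'))"
  using part1 part2 part3 part4 by blast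

end
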